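(* Let $\mathcal{X}\subseteq\mathbb{R}^d$ be nonempty, closed and convex, let $f:\mathbb{R}^d\to\mathbb{R}$ be convex and differentiable, and assume $\mathcal{X}_\star:=\operatorname{arg\,min}_{x\in\mathcal{X}} f(x)$ is nonempty. Assume there is $G>0$ with $\|\nabla f(x)\|\le G$ for all $x\in\mathcal{X}$. Let $x_0\in\mathcal{X}$, $x_\star\in\mathcal{X}_\star$, and let $\{x_k\}_{k\ge0}$ be generated by $x_{k+1}\in\operatorname{arg\,min}_{z\in\mathcal{X}\cap\mathcal{B}(x_k,t_k)}\langle\nabla f(x_k),z\rangle$, where $t_k:=\frac{f(x_k)-f(x_\star)}{\|\nabla f(x_k)\|}$ whenever $x_k\neq x_\star$ and $t_k=0$ when $x_k=x_\star$. Then for every $K\ge1$, $$\frac1K\sum_{k=0}^{K-1}(f(x_k)-f(x_\star))^2\le\frac{G^2\|x_0-x_\star\|^2}{K},$$ and the average iterate $\hat x_K:=\frac1K\sum_{k=0}^{K-1}x_k$ satisfies $f(\hat x_K)-f(x_\star)\le\frac{G\|x_0-x_\star\|}{\sqrt K}$.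
   Context: $\|\cdot\|$ is the Euclidean norm, $\mathcal{B}(x,t):=\{y:\|y-x\|\le t\}$. *)

theory Defs
  imports "HOL-Analysis.Analysis"
begin

definition step_size :: "('a::real_normed_vector \<Rightarrow> real) \<Rightarrow> ('a \<Rightarrow> 'a) \<Rightarrow> 'a \<Rightarrow> 'a \<Rightarrow> real" where
  "step_size f df xs x = (if x = xs then 0 else (f x - f xs) / norm (df x))"

end

theory Submission
  imports Defs
begin

lemma grad_ineq:
  fixes f :: "'a::euclidean_space \<Rightarrow> real"
  assumes conv: "convex_on UNIV f"
    and der: "(f has_derivative (\<lambda>h. g \<bullet> h)) (at c)"
  shows "f c + g \<bullet> (w - c) \<le> f w"
proof -
  define \<phi> where "\<phi> s = f (c + s *\<^sub>R (w - c))" for s :: real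
  have cphi: "convex_on UNIV \<phi>"
  proof (rule convex_onI)
    fix t x y :: real assume t: "t > 0" "t < 1"
    have "c + ((1 - t) *\<^sub>R x + t *\<^sub>R y) *\<^sub>R (w - c)
        = (1 - t) *\<^sub>R (c + x *\<^sub>R (w - c)) + t *\<^sub>R (c + y *\<^sub>R (w - c))"
      by (simp add: algebra_simps)
    then show "\<phi> ((1 - t) *\<^sub>R x + t *\<^sub>R y) \<le> (1 - t) * \<phi> x + t * \<phi> y"
      unfolding \<phi>_def using convex_onD[OF conv, of t] t by auto
  qed simp
  have d1: "((\<lambda>s. c + s *\<^sub>R (w - c)) has_derivative (\<lambda>h. h *\<^sub>R (w - c))) (at 0)"
    by (auto intro!: derivative_eq_intros)
  have d2: "(f has_derivative (\<lambda>h. g \<bullet> h)) (at ((\<lambda>s. c + s *\<^sub>R (w - c)) 0))"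
    using der by simp
  have "((f \<circ> (\<lambda>s. c + s *\<^sub>R (w - c))) has_derivative ((\<lambda>h. g \<bullet> h) \<circ> (\<lambda>h. h *\<^sub>R (w - c)))) (at 0)"
    by (rule diff_chain_at[OF d1 d2])
  moreover have "(f \<circ> (\<lambda>s. c + s *\<^sub>R (w - c))) = \<phi>" by (auto simp: \<phi>_def)
  moreover have "((\<lambda>h. g \<bullet> h) \<circ> (\<lambda>h. h *\<^sub>R (w - c))) = (*) (g \<bullet> (w - c))"
    by (auto simp: fun_eq_iff)
  ultimately have "(\<phi> has_real_derivative (g \<bullet> (w - c))) (at 0)"
    by (simp add: has_field_derivative_def)
  then have "\<phi> 1 - \<phi> 0 \<ge> (g \<bullet> (w - c)) * (1 - 0)"
    by (intro convex_on_imp_above_tangent[OF cphi]) auto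
  then show ?thesis by (simp add: \<phi>_def)
qed

lemma exists_s:
  fixes a b e :: real
  assumes "e \<ge> 0" "b \<ge> 0" "a < 0 \<or> e > 0"
  shows "\<exists>s. 0 < s \<and> s \<le> 1 \<and> 2 * s * a + s ^ 2 * b \<le> e"
proof (cases "a < 0")
  case True
  define s where "s = min 1 (-a/(b+1))"
  have "-a/(b+1) > 0" using True assms by (intro divide_pos_pos) auto
  then have s0: "s > 0" "s \<le> 1" by (auto simp: s_def)
  have "s \<le> -a/(b+1)" by (simp add: s_def)
  then have "s * (b+1) \<le> -a" using assms pos_le_divide_eq[of "b+1" s "-a"] by simp
  then have "s * b \<le> -a" using s0 by (simp add: algebra_simps)
  then have "s * (s * b) \<le> s * (-a)" apply (rule mult_left_mono) using s0 by auto
  then have 1: "s^2 * b \<le> s * (-a)" by (simp add: power2_eq_square mult.assoc)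
  have 2: "s * a < 0" using s0 True by (simp add: mult_pos_neg)
  have "2 * s * a + s ^ 2 * b \<le> e" using 1 2 assms by (simp add: algebra_simps)
  then show ?thesis using s0 by blast
next
  case False
  then have e: "e > 0" "a \<ge> 0" using assms by auto
  define s where "s = min 1 (e/(2*a+b+1))"
  have "e/(2*a+b+1) > 0" using e assms by (intro divide_pos_pos) auto
  then have s0: "s > 0" "s \<le> 1" by (auto simp: s_def)
  have "s \<le> e/(2*a+b+1)" by (simp add: s_def)
  then have 1: "s * (2*a+b+1) \<le> e" using assms e by (simp add: pos_le_divide_eq)
  have "s * (s * b) \<le> 1 * (s * b)"
    apply (rule mult_right_mono) using s0 assms by auto
  then have 2: "s^2 * b \<le> s * b" by (simp add: power2_eq_square mult.assoc)
  have "2 * s * a + s ^ 2 * b \<le> e" using 1 2 s0 by (simp add: algebra_simps)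
  then show ?thesis using s0 by blast
qed

lemma step_lemma:
  fixes X :: "'a::euclidean_space set" and g c y xs :: 'a and r :: real
  assumes cX: "convex X" and xsX: "xs \<in> X"
    and y: "y \<in> X \<inter> cball c r"
    and ymin: "\<forall>z \<in> X \<inter> cball c r. g \<bullet> y \<le> g \<bullet> z"
    and r: "r \<ge> 0" and rg: "r > 0 \<Longrightarrow> g \<noteq> 0"
    and gap: "r * norm g \<le> g \<bullet> (c - xs)"
  shows "(norm (y - xs))\<^sup>2 \<le> (norm (c - xs))\<^sup>2 - r\<^sup>2"
proof (cases "r = 0")
  case True
  then have "y = c" using y by auto
  then show ?thesis using True by simp
next
  case False
  then have rp: "r > 0" and g0: "g \<noteq> 0" using r rg by auto
  define u where "u = y - c"
  define v where "v = xs - c"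
  have nu: "norm u \<le> r" using y by (auto simp: u_def dist_norm norm_minus_commute)
  have key: "norm u = r \<and> u \<bullet> (v - u) \<ge> 0"
  proof (rule ccontr)
    assume nk: "\<not> (norm u = r \<and> u \<bullet> (v - u) \<ge> 0)"
    define a where "a = u \<bullet> (v - u)"
    define b where "b = (norm (v - u))\<^sup>2"
    define e where "e = r\<^sup>2 - (norm u)\<^sup>2"
    have "(norm u)\<^sup>2 \<le> r\<^sup>2" using nu by (intro power_mono) auto
    then have "e \<ge> 0" unfolding e_def by simp
    moreover have "a < 0 \<or> e > 0"
    proof (cases "norm u < r")
      case True
      then have "(norm u)\<^sup>2 < r\<^sup>2" by (intro power_strict_mono) auto
      then show ?thesis unfolding e_def by simp
    next
      case False
      then show ?thesis using nk nu unfolding a_def by auto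
    qed
    ultimately obtain s where s: "0 < s" "s \<le> 1" "2 * s * a + s ^ 2 * b \<le> e"
      using exists_s[of e b a] b_def by auto
    define w where "w = y + s *\<^sub>R (xs - y)"
    have "w = (1 - s) *\<^sub>R y + s *\<^sub>R xs" by (simp add: w_def algebra_simps)
    then have wX: "w \<in> X" using cX xsX y s by (auto intro: convexD_alt)
    have "w - c = u + s *\<^sub>R (v - u)" by (simp add: w_def u_def v_def algebra_simps)
    moreover have "(norm (u + s *\<^sub>R (v - u)))\<^sup>2 = (norm u)\<^sup>2 + 2 * s * a + s ^ 2 * b"
      unfolding power2_norm_eq_inner a_def b_def
      by (simp add: inner_add_left inner_add_right inner_commute algebra_simps power2_eq_square)
    ultimately have "(norm (w - c))\<^sup>2 = (norm u)\<^sup>2 + 2 * s * a + s ^ 2 * b" by simp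
    then have "(norm (w - c))\<^sup>2 \<le> r\<^sup>2" using s unfolding e_def by linarith
    then have "norm (w - c) \<le> r" apply (rule power2_le_imp_le) using rp by auto
    then have "w \<in> cball c r" by (simp add: dist_norm norm_minus_commute)
    then have "g \<bullet> y \<le> g \<bullet> w" using ymin wX by auto
    then have "0 \<le> s * (g \<bullet> (xs - y))" by (simp add: w_def inner_add_right)
    then have gxy: "g \<bullet> (v - u) \<ge> 0" using s
      by (simp add: u_def v_def zero_le_mult_iff algebra_simps)
    have gu: "g \<bullet> u \<le> - r * norm g" using gap gxy
      by (simp add: u_def v_def inner_diff_right)
    define q where "q = (r / norm g) *\<^sub>R g"
    have ng: "norm g > 0" using g0 by simp
    have nq: "norm q = r" using ng rp by (simp add: q_def)
    have uqi: "u \<bullet> q = (r / norm g) * (g \<bullet> u)" by (simp add: q_def inner_commute)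
    have "(norm (u + q))\<^sup>2 = (norm u)\<^sup>2 + 2 * (u \<bullet> q) + (norm q)\<^sup>2"
      unfolding power2_norm_eq_inner by (simp add: inner_add_left inner_add_right inner_commute)
    also have "\<dots> = (norm u)\<^sup>2 + 2 * (r / norm g) * (g \<bullet> u) + r\<^sup>2"
      using nq uqi by simp
    also have "2 * (r / norm g) * (g \<bullet> u) \<le> 2 * (r / norm g) * (- r * norm g)"
      apply (rule mult_left_mono) using gu rp ng by auto
    also have "2 * (r / norm g) * (- r * norm g) = - 2 * r\<^sup>2"
      using ng by (simp add: power2_eq_square)
    finally have "(norm (u + q))\<^sup>2 \<le> (norm u)\<^sup>2 - r\<^sup>2" by simp
    moreover have "(norm u)\<^sup>2 \<le> r\<^sup>2" using nu norm_ge_zero by (intro power_mono) auto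
    ultimately have "(norm (u + q))\<^sup>2 \<le> 0" by linarith
    then have uq: "u = - q" by (simp add: eq_neg_iff_add_eq_0)
    then have nur: "norm u = r" using rp ng by (simp add: q_def)
    have uvu: "u \<bullet> (v - u) = - (r / norm g) * (g \<bullet> (v - u))"
      using uq by (simp add: q_def)
    have "g \<bullet> u = - r * norm g" using uq ng
      by (simp add: q_def power2_norm_eq_inner[symmetric] power2_eq_square)
    moreover have "g \<bullet> v \<le> - r * norm g" using gap
      by (simp add: v_def inner_diff_right)
    ultimately have "g \<bullet> (v - u) \<le> 0" by (simp add: inner_diff_right)
    then have "g \<bullet> (v - u) = 0" using gxy by linarith
    then show False using nk nur uvu by auto
  qed
  have "y - xs = u - v" by (simp add: u_def v_def)
  then have "(norm (y - xs))\<^sup>2 = (norm u)\<^sup>2 - 2 * (u \<bullet> v) + (norm v)\<^sup>2"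
    by (simp add: power2_norm_eq_inner inner_diff_left inner_diff_right inner_commute)
  moreover have "u \<bullet> v \<ge> (norm u)\<^sup>2" using key
    by (metis inner_diff_right power2_norm_eq_inner diff_ge_0_iff_ge)
  moreover have "(norm v)\<^sup>2 = (norm (c - xs))\<^sup>2" by (simp add: v_def norm_minus_commute)
  moreover have "(norm u)\<^sup>2 = r\<^sup>2" using key by simp
  ultimately show ?thesis by linarith
qed

theorem theorem4:
  fixes X :: "'a::euclidean_space set"
    and f :: "'a \<Rightarrow> real" and df :: "'a \<Rightarrow> 'a"
    and G :: real and xs :: 'a and x :: "nat \<Rightarrow> 'a" and K :: nat
  assumes X: "X \<noteq> {}" "closed X" "convex X"
    and f_conv: "convex_on UNIV f"
    and f_grad: "\<And>y. (f has_derivative (\<lambda>h. df y \<bullet> h)) (at y)"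
    and G: "G > 0" "\<And>y. y \<in> X \<Longrightarrow> norm (df y) \<le> G"
    and xs: "xs \<in> X" "\<And>y. y \<in> X \<Longrightarrow> f xs \<le> f y"
    and x0: "x 0 \<in> X"
    and step: "\<And>k. x (Suc k) \<in> X \<inter> cball (x k) (step_size f df xs (x k)) \<and>
                 (\<forall>z \<in> X \<inter> cball (x k) (step_size f df xs (x k)).
                    df (x k) \<bullet> x (Suc k) \<le> df (x k) \<bullet> z)"
    and K: "K \<ge> 1"
  shows "(1 / real K) * (\<Sum>k<K. (f (x k) - f xs)\<^sup>2) \<le> G\<^sup>2 * (norm (x 0 - xs))\<^sup>2 / real K \<and>
         f ((1 / real K) *\<^sub>R (\<Sum>k<K. x k)) - f xs \<le> G * norm (x 0 - xs) / sqrt (real K)"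
proof -
  define h where "h k = f (x k) - f xs" for k
  define r where "r k = step_size f df xs (x k)" for k
  define d where "d k = norm (x k - xs)" for k
  have xX: "x k \<in> X" for k by (induction k) (use x0 step in auto)
  have h0: "h k \<ge> 0" for k using xs(2)[OF xX] by (simp add: h_def)
  have gi: "h k \<le> df (x k) \<bullet> (x k - xs)" for k
    using grad_ineq[OF f_conv f_grad, of "x k" xs] by (simp add: h_def inner_diff_right)
  have props: "r k \<ge> 0 \<and> (r k > 0 \<longrightarrow> df (x k) \<noteq> 0) \<and>
      r k * norm (df (x k)) \<le> df (x k) \<bullet> (x k - xs) \<and> h k \<le> G * r k" for k
  proof (cases "x k = xs")
    case True
    then show ?thesis by (simp add: r_def step_size_def h_def)
  next
    case False
    show ?thesis
    proof (cases "df (x k) = 0")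
      case True
      then have "h k = 0" using gi[of k] h0[of k] by simp
      then show ?thesis using True False by (simp add: r_def step_size_def)
    next
      case False2: False
      then have ng: "norm (df (x k)) > 0" by simp
      have rk: "r k = h k / norm (df (x k))" using False by (simp add: r_def step_size_def h_def)
      have r0: "r k \<ge> 0" using rk h0[of k] ng by simp
      have rh: "r k * norm (df (x k)) = h k" using rk ng by simp
      have "r k * norm (df (x k)) \<le> r k * G" using G(2)[OF xX] r0 by (simp add: mult_left_mono)
      then show ?thesis using r0 rh gi[of k] False2 by (simp add: mult.commute)
    qed
  qed
  have dstep: "(d (Suc k))\<^sup>2 \<le> (d k)\<^sup>2 - (r k)\<^sup>2" for k
    unfolding d_def
    apply (rule step_lemma[OF X(3) xs(1), of "x (Suc k)" "x k" "r k" "df (x k)"])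
    using step[of k] props[of k] by (auto simp: r_def)
  have sumr: "(\<Sum>k<n. (r k)\<^sup>2) \<le> (d 0)\<^sup>2 - (d n)\<^sup>2" for n
  proof (induction n)
    case 0 then show ?case by simp
  next
    case (Suc n) then show ?case using dstep[of n] by simp
  qed
  have hsq: "(h k)\<^sup>2 \<le> G\<^sup>2 * (r k)\<^sup>2" for k
  proof -
    have "(h k)\<^sup>2 \<le> (G * r k)\<^sup>2" using h0[of k] props[of k] by (intro power_mono) auto
    then show ?thesis by (simp add: power_mult_distrib)
  qed
  have S: "(\<Sum>k<K. (h k)\<^sup>2) \<le> G\<^sup>2 * (d 0)\<^sup>2"
  proof -
    have "(\<Sum>k<K. (h k)\<^sup>2) \<le> (\<Sum>k<K. G\<^sup>2 * (r k)\<^sup>2)" by (rule sum_mono) (rule hsq)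
    also have "\<dots> = G\<^sup>2 * (\<Sum>k<K. (r k)\<^sup>2)" by (simp add: sum_distrib_left)
    also have "\<dots> \<le> G\<^sup>2 * ((d 0)\<^sup>2 - (d K)\<^sup>2)" by (rule mult_left_mono[OF sumr]) simp
    also have "\<dots> \<le> G\<^sup>2 * (d 0)\<^sup>2" by (simp add: mult_left_mono)
    finally show ?thesis .
  qed
  have Kp: "real K > 0" using K by simp
  have part1: "(1 / real K) * (\<Sum>k<K. (f (x k) - f xs)\<^sup>2) \<le> G\<^sup>2 * (norm (x 0 - xs))\<^sup>2 / real K"
    using S Kp by (simp add: h_def d_def divide_right_mono)
  have jen: "f (\<Sum>k<K. (1 / real K) *\<^sub>R x k) \<le> (\<Sum>k<K. (1 / real K) * f (x k))"
  proof (rule convex_on_sum[OF finite_lessThan _ f_conv])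
    have "0 \<in> {..<K}" using K by simp
    then show "{..<K} \<noteq> {}" by blast
    show "(\<Sum>i<K. 1 / real K) = 1" using Kp by simp
  qed auto
  have "(\<Sum>k<K. (1 / real K) * f (x k)) - f xs = (1 / real K) * (\<Sum>k<K. h k)"
  proof -
    have "(\<Sum>k<K. h k) = (\<Sum>k<K. f (x k)) - real K * f xs" by (simp add: h_def sum_subtractf)
    moreover have "(\<Sum>k<K. (1 / real K) * f (x k)) = (1 / real K) * (\<Sum>k<K. f (x k))"
      by (simp add: sum_distrib_left)
    ultimately show ?thesis using Kp by (simp add: right_diff_distrib)
  qed
  then have A: "f ((1 / real K) *\<^sub>R (\<Sum>k<K. x k)) - f xs \<le> (1 / real K) * (\<Sum>k<K. h k)"
    using jen by (simp add: scaleR_sum_right)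
  have "(\<Sum>k<K. h k)\<^sup>2 \<le> (\<Sum>k<K. (h k)\<^sup>2) * real K"
    using sum_squared_le_sum_of_squares[of h "{..<K}"] by simp
  also have "\<dots> \<le> G\<^sup>2 * (d 0)\<^sup>2 * real K" using S Kp by (simp add: mult_right_mono)
  finally have "(\<Sum>k<K. h k) \<le> sqrt (G\<^sup>2 * (d 0)\<^sup>2 * real K)" by (rule real_le_rsqrt)
  also have "sqrt (G\<^sup>2 * (d 0)\<^sup>2 * real K) = G * d 0 * sqrt (real K)"
    using G(1) by (simp add: real_sqrt_mult d_def)
  finally have B: "(1 / real K) * (\<Sum>k<K. h k) \<le> (1 / real K) * (G * d 0 * sqrt (real K))"
    using Kp by (simp add: divide_right_mono)
  have "(1 / real K) * (G * d 0 * sqrt (real K)) = G * d 0 / sqrt (real K)"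
  proof -
    have "(1 / real K) * (G * d 0 * sqrt (real K)) = G * d 0 / (real K / sqrt (real K))"
      by simp
    also have "real K / sqrt (real K) = sqrt (real K)" by (rule real_div_sqrt) simp
    finally show ?thesis .
  qed
  with A B have "f ((1 / real K) *\<^sub>R (\<Sum>k<K. x k)) - f xs \<le> G * norm (x 0 - xs) / sqrt (real K)"
    by (simp add: d_def)
  with part1 show ?thesis by blast
qed

end
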